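(* Let $N\ge2$ be even and let $\mathcal M=(M_{ij})_{1\le i<j\le N}$ be a family of $\binom N2$ real symmetric $2\times2$ matrices such that $Y=\Psi(\mathcal M)\in SDD_N$ and $\phi_{SDD}(\mathcal M)$ is finite. Then there exist $N-1$ matrices $Z_1,\dots,Z_{N-1}\succ0$ such that $Y=\sum_{k=1}^{N-1}Z_k$ and $\phi_{SDD}(\mathcal M)=\sum_{k=1}^{N-1}\log\det Z_k$.
   Context: $\Psi(\mathcal M)=\sum_{i<j}\Psi_{ij}(M_{ij})$, where $\Psi_{ij}(M)$ is the $N\times N$ matrix with entries $(i,i),(i,j),(j,i),(j,j)$ equal to $M(1,1),M(1,2),M(2,1),M(2,2)$ and zeros elsewhere. $\phi_{SDD}(\mathcal M)=\sum_{i<j}\log\big(M_{ij}(1,1)M_{ij}(2,2)-M_{ij}(1,2)^2\big)$, which is finite exactly when every $M_{ij}\succ0$. $SDD_N$: matrices $DYD$ with $D$ positive diagonal and $Y$ diagonally dominant ($Y(i,i)\ge\sum_{j\ne i}|Y(i,j)|$ for all $i$). *)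

theory Defs
  imports Complex_Main "Jordan_Normal_Form.Determinant"
begin

text \<open>Real matrices are JNF matrices; indices are 0-based, so the paper's index i
  in 1..N corresponds to i-1, and entry M(1,2) of a 2x2 matrix is M $$ (0,1).\<close>

definition pd_mat :: "nat \<Rightarrow> real mat \<Rightarrow> bool" where
  "pd_mat n Z \<longleftrightarrow> Z \<in> carrier_mat n n \<and> transpose_mat Z = Z \<and>
     (\<forall>x \<in> carrier_vec n. x \<noteq> 0\<^sub>v n \<longrightarrow> x \<bullet> (Z *\<^sub>v x) > 0)"

definition pairs :: "nat \<Rightarrow> (nat \<times> nat) set" where
  "pairs N = {(i, j). i < j \<and> j < N}"

definition Psi_ij :: "nat \<Rightarrow> nat \<Rightarrow> nat \<Rightarrow> real mat \<Rightarrow> real mat" where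
  "Psi_ij N i j M = mat N N (\<lambda>(a, b).
      if a = i \<and> b = i then M $$ (0,0)
      else if a = i \<and> b = j then M $$ (0,1)
      else if a = j \<and> b = i then M $$ (1,0)
      else if a = j \<and> b = j then M $$ (1,1)
      else 0)"

definition Psi :: "nat \<Rightarrow> (nat \<Rightarrow> nat \<Rightarrow> real mat) \<Rightarrow> real mat" where
  "Psi N M = mat N N (\<lambda>(a, b). \<Sum>(i, j) \<in> pairs N. Psi_ij N i j (M i j) $$ (a, b))"

definition phi_SDD :: "nat \<Rightarrow> (nat \<Rightarrow> nat \<Rightarrow> real mat) \<Rightarrow> real" where
  "phi_SDD N M = (\<Sum>(i, j) \<in> pairs N.
      ln (M i j $$ (0,0) * M i j $$ (1,1) - (M i j $$ (0,1))^2))"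

definition diag_dominant :: "nat \<Rightarrow> real mat \<Rightarrow> bool" where
  "diag_dominant N Y \<longleftrightarrow> Y \<in> carrier_mat N N \<and>
     (\<forall>i < N. Y $$ (i,i) \<ge> (\<Sum>j \<in> {0..<N} - {i}. \<bar>Y $$ (i,j)\<bar>))"

definition SDD :: "nat \<Rightarrow> real mat set" where
  "SDD N = {D * Y * D | D Y. D \<in> carrier_mat N N \<and> diagonal_mat D \<and>
      (\<forall>i < N. D $$ (i,i) > 0) \<and> diag_dominant N Y}"

end

theory Submission
  imports Defs
begin


definition Zent :: "(nat\<Rightarrow>nat) \<Rightarrow> (nat\<Rightarrow>nat\<Rightarrow>real mat) \<Rightarrow> nat \<Rightarrow> nat \<Rightarrow> real" where
 "Zent m M a b = (if a < m a then (if b = a then M a (m a) $$ (0,0) else if b = m a then M a (m a) $$ (0,1) else 0)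
    else (if b = a then M (m a) a $$ (1,1) else if b = m a then M (m a) a $$ (1,0) else 0))"

definition dt :: "real mat \<Rightarrow> real" where
 "dt X = X $$ (0,0) * X $$ (1,1) - (X $$ (0,1))^2"

definition invol :: "nat \<Rightarrow> (nat \<Rightarrow> nat) \<Rightarrow> bool" where
 "invol N m \<longleftrightarrow> (\<forall>a<N. m a < N \<and> m a \<noteq> a \<and> m (m a) = a)"

lemma vec2_form:
  fixes X :: "real mat"
  assumes c: "X \<in> carrier_mat 2 2"
  shows "vec 2 (\<lambda>i. if i = 0 then u else v) \<bullet> (X *\<^sub>v vec 2 (\<lambda>i. if i = 0 then u else v)) = u*(X$$(0,0)*u + X$$(0,1)*v) + v*(X$$(1,0)*u + X$$(1,1)*v)"
proof -
  let ?w = "vec 2 (\<lambda>i. if i = 0 then u else v)"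
  have s2: "\<And>f. (\<Sum>i\<in>{0..<2::nat}. f i) = f 0 + (f 1::real)"
    by (simp add: numeral_2_eq_2)
  have e: "(X *\<^sub>v ?w) $ i = X$$(i,0)*u + X$$(i,1)*v" if "i < 2" for i
    using c that by (simp add: scalar_prod_def s2)
  show ?thesis
    using c by (simp add: scalar_prod_def s2 e)
qed

lemma pd2:
  assumes "pd_mat 2 X" "(u::real) \<noteq> 0 \<or> v \<noteq> 0"
  shows "u*(X$$(0,0)*u + X$$(0,1)*v) + v*(X$$(1,0)*u + X$$(1,1)*v) > 0"
proof -
  let ?w = "vec 2 (\<lambda>i. if i = 0 then u else v)"
  have c: "X \<in> carrier_mat 2 2" using assms(1) unfolding pd_mat_def by auto
  have "?w \<noteq> 0\<^sub>v 2"
  proof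
    assume "?w = 0\<^sub>v 2"
    then have "?w $ 0 = 0" "?w $ 1 = 0" by auto
    then show False using assms(2) by auto
  qed
  then have "?w \<bullet> (X *\<^sub>v ?w) > 0" using assms(1) unfolding pd_mat_def by auto
  then show ?thesis using vec2_form[OF c] by simp
qed

lemma pd2_nonneg:
  assumes "pd_mat 2 X"
  shows "u*(X$$(0,0)*u + X$$(0,1)*v) + v*(X$$(1,0)*u + X$$(1,1)*v) \<ge> (0::real)"
  using pd2[OF assms, of u v] by (cases "u = 0 \<and> v = 0") auto

lemma sym2:
  assumes "X \<in> carrier_mat 2 2" "transpose_mat X = X"
  shows "X $$ (1,0) = X $$ (0,1)"
proof -
  have "transpose_mat X $$ (1,0) = X $$ (0,1)" using assms(1) by (simp add: numeral_2_eq_2)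
  then show ?thesis using assms(2) by simp
qed

lemma pd2_diag:
  assumes "pd_mat 2 X"
  shows "X $$ (0,0) > 0"
  using pd2[OF assms, of 1 0] by simp

lemma pd2_dt:
  assumes "pd_mat 2 X" "X \<in> carrier_mat 2 2" "transpose_mat X = X"
  shows "dt X > 0"
proof -
  have s: "X $$ (1,0) = X $$ (0,1)" using sym2 assms(2,3) .
  have p: "X $$ (0,0) > 0" using pd2_diag[OF assms(1)] .
  have "(- X$$(0,1))*(X$$(0,0)*(- X$$(0,1)) + X$$(0,1)*X$$(0,0)) + X$$(0,0)*(X$$(1,0)*(- X$$(0,1)) + X$$(1,1)*X$$(0,0)) > 0"
    using pd2[OF assms(1), of "- X$$(0,1)" "X$$(0,0)"] p by simp
  then have "X$$(0,0) * dt X > 0" unfolding dt_def s by (simp add: algebra_simps power2_eq_square)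
  then show ?thesis using p by (simp add: zero_less_mult_iff)
qed

lemma regroup_sum:
  assumes "invol N m"
  shows "(\<Sum>a\<in>{0..<N}. f a) = (\<Sum>a\<in>{a. a<N \<and> a < m a}. f a + f (m a))"
proof -
  let ?S = "{a. a<N \<and> a < m a}"
  have inj: "inj_on m ?S" using assms unfolding invol_def by (metis (mono_tags) inj_onI mem_Collect_eq)
  have im: "m ` ?S = {a. a<N \<and> m a < a}"
  proof
    show "m ` ?S \<subseteq> {a. a<N \<and> m a < a}" using assms unfolding invol_def by auto
    show "{a. a<N \<and> m a < a} \<subseteq> m ` ?S"
    proof
      fix a assume "a \<in> {a. a<N \<and> m a < a}"
      then have "m a \<in> ?S" "a = m (m a)" using assms unfolding invol_def by auto
      then show "a \<in> m ` ?S" by blast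
    qed
  qed
  have U: "{0..<N} = ?S \<union> m ` ?S"
  proof
    show "{0..<N} \<subseteq> ?S \<union> m ` ?S"
    proof
      fix a assume a: "a \<in> {0..<N}"
      then have "a < m a \<or> m a < a" using assms unfolding invol_def by (meson atLeastLessThan_iff linorder_neqE_nat)
      then show "a \<in> ?S \<union> m ` ?S" using a im by auto
    qed
    show "?S \<union> m ` ?S \<subseteq> {0..<N}" using im by auto
  qed
  have "(\<Sum>a\<in>{0..<N}. f a) = sum f ?S + sum f (m ` ?S)"
    unfolding U by (rule sum.union_disjoint) (auto simp: im)
  also have "sum f (m ` ?S) = (\<Sum>a\<in>?S. f (m a))" using sum.reindex[OF inj] by simp
  finally show ?thesis by (simp add: sum.distrib)
qed

lemma regroup_prod:
  assumes "invol N m"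
  shows "(\<Prod>a\<in>{0..<N}. f a) = (\<Prod>a\<in>{a. a<N \<and> a < m a}. f a * f (m a))"
proof -
  let ?S = "{a. a<N \<and> a < m a}"
  have inj: "inj_on m ?S" using assms unfolding invol_def by (metis (mono_tags) inj_onI mem_Collect_eq)
  have im: "m ` ?S = {a. a<N \<and> m a < a}"
  proof
    show "m ` ?S \<subseteq> {a. a<N \<and> m a < a}" using assms unfolding invol_def by auto
    show "{a. a<N \<and> m a < a} \<subseteq> m ` ?S"
    proof
      fix a assume "a \<in> {a. a<N \<and> m a < a}"
      then have "m a \<in> ?S" "a = m (m a)" using assms unfolding invol_def by auto
      then show "a \<in> m ` ?S" by blast
    qed
  qed
  have U: "{0..<N} = ?S \<union> m ` ?S"
  proof
    show "{0..<N} \<subseteq> ?S \<union> m ` ?S"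
    proof
      fix a assume a: "a \<in> {0..<N}"
      then have "a < m a \<or> m a < a" using assms unfolding invol_def by (meson atLeastLessThan_iff linorder_neqE_nat)
      then show "a \<in> ?S \<union> m ` ?S" using a im by auto
    qed
    show "?S \<union> m ` ?S \<subseteq> {0..<N}" using im by auto
  qed
  have "(\<Prod>a\<in>{0..<N}. f a) = prod f ?S * prod f (m ` ?S)"
    unfolding U by (rule prod.union_disjoint) (auto simp: im)
  also have "prod f (m ` ?S) = (\<Prod>a\<in>?S. f (m a))" using prod.reindex[OF inj] by simp
  finally show ?thesis by (simp add: prod.distrib)
qed

lemma zent_split:
  assumes "invol N m" "a < N"
  shows "Zent m M a b = (if b = a then Zent m M a a else 0) + (if b = m a then Zent m M a (m a) else 0)"
  using assms unfolding invol_def Zent_def by auto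

lemma matching_pd:
  assumes inv: "invol N m"
    and MX: "\<And>a. a<N \<Longrightarrow> a < m a \<Longrightarrow> M a (m a) \<in> carrier_mat 2 2 \<and> transpose_mat (M a (m a)) = M a (m a) \<and> pd_mat 2 (M a (m a))"
  shows "pd_mat N (mat N N (\<lambda>(a,b). Zent m M a b))"
proof -
  let ?Z = "mat N N (\<lambda>(a,b). Zent m M a b)"
  let ?S = "{a. a<N \<and> a < m a}"
  have mm: "\<And>a. a < N \<Longrightarrow> m a < N \<and> m a \<noteq> a \<and> m (m a) = a" using inv unfolding invol_def by auto
  have tr: "transpose_mat ?Z = ?Z"
  proof (rule eq_matI)
    fix a b assume ab: "a < dim_row ?Z" "b < dim_col ?Z"
    then have ab': "a < N" "b < N" by auto
    show "transpose_mat ?Z $$ (a, b) = ?Z $$ (a, b)"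
    proof -
      have "Zent m M b a = Zent m M a b"
      proof (cases "b = a")
        case True then show ?thesis by simp
      next
        case False
        show ?thesis
        proof (cases "b = m a")
          case True
          then have "m b = a" "m (m a) = a" "m a = b" using mm ab' by auto
          show ?thesis
          proof (cases "a < m a")
            case True
            have "M a (m a) $$ (1,0) = M a (m a) $$ (0,1)" using MX[OF ab'(1) True] sym2 by blast
            then show ?thesis using \<open>b = m a\<close> \<open>m (m a) = a\<close> True False
              unfolding Zent_def by auto
          next
            case F: False
            then have "b < m b" using \<open>b = m a\<close> \<open>m b = a\<close> False by auto
            have "M b (m b) $$ (1,0) = M b (m b) $$ (0,1)" using MX[OF ab'(2) \<open>b < m b\<close>] sym2 by blast
            then show ?thesis using \<open>m b = a\<close> \<open>m a = b\<close> \<open>b < m b\<close> False F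
              unfolding Zent_def by auto
          qed
        next
          case F2: False
          then have "a \<noteq> m b" using mm ab' by auto
          then show ?thesis using False F2 unfolding Zent_def by auto
        qed
      qed
      then show ?thesis using ab' by simp
    qed
  qed auto
  have q: "x \<bullet> (?Z *\<^sub>v x) > 0" if x: "x \<in> carrier_vec N" "x \<noteq> 0\<^sub>v N" for x
  proof -
    define F where "F a = x$a * (Zent m M a a * x$a + Zent m M a (m a) * x$(m a))" for a
    have row: "(?Z *\<^sub>v x) $ a = Zent m M a a * x$a + Zent m M a (m a) * x$(m a)" if a: "a < N" for a
    proof -
      have "(?Z *\<^sub>v x) $ a = (\<Sum>b\<in>{0..<N}. Zent m M a b * x$b)"
        using a x(1) by (simp add: scalar_prod_def)
      also have "\<dots> = (\<Sum>b\<in>{0..<N}. (if b = a then Zent m M a a * x$b else 0) + (if b = m a then Zent m M a (m a) * x$b else 0))"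
        by (rule sum.cong[OF refl], subst zent_split[OF inv a], simp add: distrib_right)
      also have "\<dots> = Zent m M a a * x$a + Zent m M a (m a) * x$(m a)"
        using a mm[OF a] by (simp add: sum.distrib)
      finally show ?thesis .
    qed
    have "x \<bullet> (?Z *\<^sub>v x) = (\<Sum>a\<in>{0..<N}. F a)"
      unfolding scalar_prod_def F_def using x(1) row by (auto intro: sum.cong)
    also have "\<dots> = (\<Sum>a\<in>?S. F a + F (m a))" by (rule regroup_sum[OF inv])
    also have "\<dots> > 0"
    proof -
      have FF: "F a + F (m a) = x$a*(M a (m a)$$(0,0)*x$a + M a (m a)$$(0,1)*x$(m a)) + x$(m a)*(M a (m a)$$(1,0)*x$a + M a (m a)$$(1,1)*x$(m a))"
        if a: "a \<in> ?S" for a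
        using a mm[of a] unfolding F_def Zent_def by (auto simp: algebra_simps)
      have "\<exists>a0<N. x $ a0 \<noteq> 0"
      proof (rule ccontr)
        assume "\<not> (\<exists>a0<N. x $ a0 \<noteq> 0)"
        then have "x = 0\<^sub>v N" using x(1) by (intro eq_vecI) auto
        then show False using x(2) by simp
      qed
      then obtain a0 where a0: "a0 < N" "x $ a0 \<noteq> 0" by blast
      define r where "r = (if a0 < m a0 then a0 else m a0)"
      have rS: "r \<in> ?S" using a0 mm[OF a0(1)] unfolding r_def by auto
      have "x $ r \<noteq> 0 \<or> x $ (m r) \<noteq> 0" using a0 mm[OF a0(1)] unfolding r_def by auto
      then have pos: "F r + F (m r) > 0" using FF[OF rS] pd2[of "M r (m r)"] MX rS by auto
      show ?thesis
      proof (rule sum_pos2[of ?S r "\<lambda>a. F a + F (m a)"])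
        show "finite ?S" by simp
        show "r \<in> ?S" by (rule rS)
        show "0 < F r + F (m r)" by (rule pos)
        fix a assume aS: "a \<in> ?S"
        then have "pd_mat 2 (M a (m a))" using MX by auto
        then show "0 \<le> F a + F (m a)" using FF[OF aS] pd2_nonneg[of "M a (m a)" "x$a" "x$(m a)"] by simp
      qed
    qed
    finally show ?thesis .
  qed
  show ?thesis unfolding pd_mat_def using tr q by auto
qed

lemma matching_det:
  assumes inv: "invol N m"
    and MX: "\<And>a. a<N \<Longrightarrow> a < m a \<Longrightarrow> M a (m a) \<in> carrier_mat 2 2 \<and> transpose_mat (M a (m a)) = M a (m a) \<and> pd_mat 2 (M a (m a))"
  shows "det (mat N N (\<lambda>(a,b). Zent m M a b)) = (\<Prod>a\<in>{a. a<N \<and> a < m a}. dt (M a (m a)))"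
proof -
  let ?Z = "mat N N (\<lambda>(a,b). Zent m M a b)"
  let ?S = "{a. a<N \<and> a < m a}"
  have mm: "\<And>a. a < N \<Longrightarrow> m a < N \<and> m a \<noteq> a \<and> m (m a) = a" using inv unfolding invol_def by auto
  define l where "l r = - (Zent m M r (m r) / Zent m M (m r) (m r))" for r
  define L where "L = mat N N (\<lambda>(r,s). (if s = r then 1 else 0) + (if s = m r \<and> m r < r then l r else 0))"
  have Lc: "L \<in> carrier_mat N N" unfolding L_def by simp
  have Zc: "?Z \<in> carrier_mat N N" by simp
  have detL: "det L = 1"
  proof -
    have "det L = prod_list (diag_mat L)"
      by (rule det_lower_triangular[OF _ Lc]) (auto simp: L_def)
    also have "diag_mat L = map (\<lambda>i. 1) [0..<N]"
      unfolding diag_mat_def L_def using mm by auto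
    moreover have "prod_list (map (\<lambda>i. 1::real) xs) = 1" for xs :: "nat list"
      by (induct xs) auto
    ultimately show ?thesis by simp
  qed
  have LZ: "(L * ?Z) $$ (r,s) = Zent m M r s + (if m r < r then l r * Zent m M (m r) s else 0)"
    if rs: "r < N" "s < N" for r s
  proof -
    have "(L * ?Z) $$ (r,s) = (\<Sum>t\<in>{0..<N}. L $$ (r,t) * Zent m M t s)"
      using rs Lc by (simp add: scalar_prod_def)
    also have "\<dots> = (\<Sum>t\<in>{0..<N}. (if t = r then Zent m M t s else 0) + (if t = m r \<and> m r < r then l r * Zent m M t s else 0))"
      by (rule sum.cong[OF refl]) (auto simp: L_def rs)
    also have "\<dots> = Zent m M r s + (if m r < r then l r * Zent m M (m r) s else 0)"
      using rs mm[OF rs(1)] by (simp add: sum.distrib)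
    finally show ?thesis .
  qed
  have D0: "Zent m M a a > 0" if a: "a < N" for a
  proof (cases "a < m a")
    case True
    then show ?thesis using pd2_diag MX[OF a True] unfolding Zent_def by auto
  next
    case False
    then have "m a < m (m a)" "m a < N" using mm[OF a] by auto
    then have "pd_mat 2 (M (m a) a)" using MX[of "m a"] mm[OF a] by auto
    then have "M (m a) a $$ (1,1) > 0" using pd2[of "M (m a) a" 0 1] by simp
    then show ?thesis using False unfolding Zent_def by auto
  qed
  have ut: "upper_triangular (L * ?Z)"
  proof (rule upper_triangularI)
    fix r s assume sr: "s < r" and r: "r < dim_row (L * ?Z)"
    then have r': "r < N" "s < N" using Lc by auto
    show "(L * ?Z) $$ (r,s) = 0"
    proof (cases "s = m r")
      case True
      then have "m r < r" using sr by simp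
      then show ?thesis using LZ[OF r'] True D0[of "m r"] mm[OF r'(1)] unfolding l_def by simp
    next
      case False
      have "Zent m M r s = 0" using False sr unfolding Zent_def by auto
      moreover have "Zent m M (m r) s = 0" using False sr mm[OF r'(1)] unfolding Zent_def by auto
      ultimately show ?thesis using LZ[OF r'] by simp
    qed
  qed
  have "det (L * ?Z) = det ?Z" using det_mult[OF Lc Zc] detL by simp
  also have "det (L * ?Z) = prod_list (diag_mat (L * ?Z))"
    by (rule det_upper_triangular[OF ut mult_carrier_mat[OF Lc Zc]])
  also have "\<dots> = (\<Prod>r\<in>{0..<N}. (L * ?Z) $$ (r,r))"
    unfolding diag_mat_def using Lc by (simp add: prod.distinct_set_conv_list[symmetric])
  also have "\<dots> = (\<Prod>r\<in>?S. (L * ?Z) $$ (r,r) * (L * ?Z) $$ (m r, m r))"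
    by (rule regroup_prod[OF inv])
  also have "\<dots> = (\<Prod>r\<in>?S. dt (M r (m r)))"
  proof (rule prod.cong[OF refl])
    fix r assume rS: "r \<in> ?S"
    then have r: "r < N" "r < m r" by auto
    note mr = mm[OF r(1)]
    let ?X = "M r (m r)"
    have s: "?X $$ (1,0) = ?X $$ (0,1)" using MX[OF r] sym2 by blast
    have p: "?X $$ (0,0) > 0" using MX[OF r] pd2_diag by blast
    have e1: "(L * ?Z) $$ (r,r) = ?X $$ (0,0)" using LZ[OF r(1) r(1)] r unfolding Zent_def by simp
    have e2: "(L * ?Z) $$ (m r, m r) = ?X $$ (1,1) - ?X $$ (1,0) / ?X $$ (0,0) * ?X $$ (0,1)"
      using LZ[of "m r" "m r"] r mr unfolding l_def Zent_def by simp
    show "(L * ?Z) $$ (r,r) * (L * ?Z) $$ (m r, m r) = dt ?X"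
      unfolding e1 e2 dt_def s using p by (simp add: field_simps power2_eq_square)
  qed
  finally show ?thesis by simp
qed



lemma NT2a:
  fixes n x y :: nat
  assumes "odd n" "x \<le> y" "y < n" "(2*x) mod n = (2*y) mod n"
  shows "x = y"
proof -
  have "2*x \<le> 2*y" using assms(2) by simp
  then have "n dvd 2*y - 2*x" using assms(4) mod_eq_dvd_iff_nat[of "2*x" "2*y" n] by simp
  then obtain q where q: "2*(y - x) = n * q" by (auto simp: right_diff_distrib')
  then have "even (n*q)" by (metis dvd_triv_left)
  then have "even q" using assms(1) by simp
  then obtain q' where "q = 2*q'" by blast
  then have yx: "y - x = n * q'" using q by simp
  have "q' = 0"
  proof (rule ccontr)
    assume "q' \<noteq> 0"
    then obtain q'' where "q' = Suc q''" by (cases q') auto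
    then have "y - x \<ge> n" using yx by simp
    then show False using assms by simp
  qed
  then show ?thesis using yx assms(2) by simp
qed

lemma NT2:
  fixes n x y :: nat
  assumes "odd n" "x < n" "y < n" "(2*x) mod n = (2*y) mod n"
  shows "x = y"
proof (cases "x \<le> y")
  case True show ?thesis using NT2a[OF assms(1) True assms(3) assms(4)] by simp
next
  case False then show ?thesis using NT2a[OF assms(1) _ assms(2) assms(4)[symmetric]] by simp
qed

lemma NT1:
  fixes n k :: nat
  assumes "odd n" "k < n"
  shows "(2 * ((k * ((n+1) div 2)) mod n)) mod n = k"
proof -
  have h: "2 * ((n+1) div 2) = n + 1" using assms(1) by simp
  have "(2 * ((k * ((n+1) div 2)) mod n)) mod n = (2 * (k * ((n+1) div 2))) mod n"
    by (rule mod_mult_right_eq)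
  also have "2 * (k * ((n+1) div 2)) = k * (2 * ((n+1) div 2))" by simp
  also have "\<dots> = k + k * n" unfolding h by simp
  also have "(k + k * n) mod n = k" using assms(2) by simp
  finally show ?thesis .
qed

lemma NT3:
  fixes n k r :: nat
  assumes "r < n" "k < n"
  shows "(r + (k+n-r) mod n) mod n = k"
proof -
  have "(r + (k+n-r) mod n) mod n = (r + (k+n-r)) mod n" by (rule mod_add_right_eq)
  also have "r + (k+n-r) = k + n" using assms by simp
  also have "(k + n) mod n = k" using assms by simp
  finally show ?thesis .
qed

lemma canc_a:
  fixes n r s t :: nat
  assumes "s \<le> t" "t < n" "(r + s) mod n = (r + t) mod n"
  shows "s = t"
proof -
  have "n dvd (r + t) - (r + s)" using assms mod_eq_dvd_iff_nat[of "r+s" "r+t" n] by simp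
  then have d: "n dvd t - s" by simp
  show ?thesis
  proof (rule ccontr)
    assume "s \<noteq> t"
    then have "t - s > 0" using assms(1) by simp
    then have "n \<le> t - s" using d by (rule dvd_imp_le[rotated])
    then show False using assms by simp
  qed
qed

lemma canc:
  fixes n r s t :: nat
  assumes "s < n" "t < n" "(r + s) mod n = (r + t) mod n"
  shows "s = t"
proof (cases "s \<le> t")
  case True show ?thesis using canc_a[OF True assms(2,3)] by simp
next
  case False then show ?thesis using canc_a[of t s n r] assms by simp
qed

lemma NT4:
  fixes n k r s :: nat
  assumes "r < n" "k < n" "s < n"
  shows "(r + s) mod n = k \<longleftrightarrow> s = (k+n-r) mod n"
proof
  assume h: "(r + s) mod n = k"
  have "(r + (k+n-r) mod n) mod n = k" by (rule NT3[OF assms(1,2)])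
  then have e: "(r + s) mod n = (r + (k+n-r) mod n) mod n" using h by simp
  have "(k+n-r) mod n < n" using assms by simp
  then show "s = (k+n-r) mod n" using canc[OF assms(3) _ e] by simp
next
  assume "s = (k+n-r) mod n"
  then show "(r + s) mod n = k" using NT3[OF assms(1,2)] by simp
qed


definition hf :: "nat \<Rightarrow> nat \<Rightarrow> nat" where "hf n k = (k * ((n+1) div 2)) mod n"
definition mk :: "nat \<Rightarrow> nat \<Rightarrow> nat \<Rightarrow> nat" where
  "mk n k r = (if r = n then hf n k else if (2*r) mod n = k then n else (k + n - r) mod n)"
definition cls :: "nat \<Rightarrow> nat \<Rightarrow> nat \<Rightarrow> nat" where
  "cls n i j = (if j = n then (2*i) mod n else (i+j) mod n)"

lemma mk_invol:
  assumes n: "odd n" and k: "k < n"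
  shows "invol (Suc n) (mk n k)"
  unfolding invol_def
proof (intro allI impI)
  fix a assume a: "a < Suc n"
  have n0: "n > 0" using n by (metis odd_pos)
  have h: "hf n k < n" "(2 * hf n k) mod n = k" using NT1[OF n k] n0 unfolding hf_def by auto
  show "mk n k a < Suc n \<and> mk n k a \<noteq> a \<and> mk n k (mk n k a) = a"
  proof (cases "a = n")
    case True
    then show ?thesis using h unfolding mk_def by auto
  next
    case an: False
    then have a': "a < n" using a by simp
    show ?thesis
    proof (cases "(2*a) mod n = k")
      case True
      then have "hf n k = a" using NT2[OF n h(1) a'] h(2) by simp
      then show ?thesis using True an a' unfolding mk_def by auto
    next
      case False
      define s where "s = (k + n - a) mod n"
      have s: "s < n" unfolding s_def using n0 by simp
      have as: "(a + s) mod n = k" using NT4[OF a' k s] s_def by simp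
      have sa: "s \<noteq> a" using as False by (metis mult_2)
      have "(s + a) mod n = k" using as by (simp add: add.commute)
      then have ms: "a = (k + n - s) mod n" using NT4[OF s k a'] by simp
      have s2: "(2*s) mod n \<noteq> k"
      proof
        assume "(2*s) mod n = k"
        then have "(s + s) mod n = k" by (simp add: mult_2)
        then have "s = (k + n - s) mod n" using NT4[OF s k s] by simp
        then show False using ms sa by simp
      qed
      have "mk n k a = s" using False an unfolding mk_def s_def by simp
      moreover have "mk n k s = a" using s2 s ms unfolding mk_def by simp
      ultimately show ?thesis using s sa by simp
    qed
  qed
qed

lemma mk_cls:
  assumes n: "odd n" and k: "k < n" and ij: "i < j" "j \<le> n"
  shows "mk n k i = j \<longleftrightarrow> cls n i j = k"
proof -
  have n0: "n > 0" using n by (metis odd_pos)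
  have i: "i < n" using ij by simp
  show ?thesis
  proof (cases "(2*i) mod n = k")
    case True
    then have mi: "mk n k i = n" using i unfolding mk_def by simp
    show ?thesis
    proof (cases "j = n")
      case True then show ?thesis using mi \<open>(2*i) mod n = k\<close> unfolding cls_def by simp
    next
      case False
      then have j: "j < n" using ij by simp
      have "(i + j) mod n \<noteq> k"
      proof
        assume "(i + j) mod n = k"
        then have "j = (k + n - i) mod n" using NT4[OF i k j] by simp
        moreover have "i = (k + n - i) mod n" using NT4[OF i k i] \<open>(2*i) mod n = k\<close> by (simp add: mult_2)
        ultimately show False using ij by simp
      qed
      then show ?thesis using mi False unfolding cls_def by simp
    qed
  next
    case False
    then have mi: "mk n k i = (k + n - i) mod n" using i unfolding mk_def by simp
    have mlt: "mk n k i < n" using mi n0 by simp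
    show ?thesis
    proof (cases "j = n")
      case True then show ?thesis using mlt False unfolding cls_def by simp
    next
      case jn: False
      then have j: "j < n" using ij by simp
      show ?thesis using NT4[OF i k j] mi jn unfolding cls_def by auto
    qed
  qed
qed

lemma sum_single:
  assumes "finite A" "x \<in> A" "\<And>y. y \<in> A \<Longrightarrow> y \<noteq> x \<Longrightarrow> g y = 0"
  shows "sum g A = g x"
proof -
  have "sum g A = g x + sum g (A - {x})" using sum.remove[OF assms(1,2)] .
  also have "sum g (A - {x}) = 0" using assms(3) by (intro sum.neutral) auto
  finally show ?thesis by simp
qed

lemma finite_pairs: "finite (pairs N)"
  by (rule finite_subset[of _ "{0..<N} \<times> {0..<N}"]) (auto simp: pairs_def)

lemma zent_as_sum:
  assumes inv: "invol N m" and ab: "a < N" "b < N"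
  shows "Zent m M a b = (\<Sum>(i,j)\<in>{(i,j). (i,j) \<in> pairs N \<and> m i = j}. Psi_ij N i j (M i j) $$ (a,b))"
proof -
  let ?P = "{(i,j). (i,j) \<in> pairs N \<and> m i = j}"
  have mm: "m a < N" "m a \<noteq> a" "m (m a) = a" using inv ab unfolding invol_def by auto
  define e0 where "e0 = (if a < m a then (a, m a) else (m a, a))"
  have fin: "finite ?P" by (rule finite_subset[OF _ finite_pairs[of N]]) auto
  have e0P: "e0 \<in> ?P" using mm ab unfolding e0_def pairs_def by auto
  have "(\<Sum>(i,j)\<in>?P. Psi_ij N i j (M i j) $$ (a,b)) = (case e0 of (i,j) \<Rightarrow> Psi_ij N i j (M i j) $$ (a,b))"
  proof (rule sum_single[OF fin e0P])
    fix y assume y: "y \<in> ?P" "y \<noteq> e0"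
    obtain i j where yij: "y = (i,j)" by (cases y)
    have ij: "i < j" "j < N" "m i = j" using y yij unfolding pairs_def by auto
    have mj: "m j = i" using ij inv unfolding invol_def by auto
    have "a \<noteq> i" using y yij ij unfolding e0_def by auto
    moreover have "a \<noteq> j" using y yij ij mj unfolding e0_def by auto
    ultimately show "(case y of (i,j) \<Rightarrow> Psi_ij N i j (M i j) $$ (a,b)) = 0"
      using yij ij ab unfolding Psi_ij_def by auto
  qed
  also have "\<dots> = Zent m M a b"
    using mm ab unfolding e0_def Psi_ij_def Zent_def by auto
  finally show ?thesis by simp
qed

lemma sum_P_reindex:
  assumes inv: "invol N m"
  shows "(\<Sum>(i,j)\<in>{(i,j). (i,j) \<in> pairs N \<and> m i = j}. h i j) = (\<Sum>a\<in>{a. a<N \<and> a < m a}. h a (m a))"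
proof -
  have eq: "{(i,j). (i,j) \<in> pairs N \<and> m i = j} = (\<lambda>a. (a, m a)) ` {a. a<N \<and> a < m a}"
    using inv unfolding pairs_def invol_def by auto
  have inj: "inj_on (\<lambda>a. (a, m a)) {a. a<N \<and> a < m a}" by (auto intro: inj_onI)
  show ?thesis unfolding eq sum.reindex[OF inj] by simp
qed

theorem lemmaA1:
  fixes N :: nat and M :: "nat \<Rightarrow> nat \<Rightarrow> real mat"
  assumes "N \<ge> 2" and "even N"
    and sym: "\<And>i j. (i, j) \<in> pairs N \<Longrightarrow> M i j \<in> carrier_mat 2 2 \<and> transpose_mat (M i j) = M i j"
    and "Psi N M \<in> SDD N"
    and fin: "\<And>i j. (i, j) \<in> pairs N \<Longrightarrow> pd_mat 2 (M i j)"
  shows "\<exists>Z :: nat \<Rightarrow> real mat. (\<forall>k \<in> {1..N-1}. pd_mat N (Z k)) \<and>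
           Psi N M = mat N N (\<lambda>(a, b). \<Sum>k = 1..N-1. Z k $$ (a, b)) \<and>
           phi_SDD N M = (\<Sum>k = 1..N-1. ln (det (Z k)))"
proof -
  define n where "n = N - 1"
  have Nn: "N = Suc n" using assms(1) unfolding n_def by simp
  have n: "odd n" using assms(2) Nn by simp
  define Z where "Z k = mat N N (\<lambda>(a,b). Zent (mk n (k-1)) M a b)" for k
  define P where "P k = {(i,j). (i,j) \<in> pairs N \<and> mk n k i = j}" for k
  have inv: "invol N (mk n k)" if "k < n" for k using mk_invol[OF n that] Nn by simp
  have MX: "M a (mk n k a) \<in> carrier_mat 2 2 \<and> transpose_mat (M a (mk n k a)) = M a (mk n k a) \<and> pd_mat 2 (M a (mk n k a))"
    if "k < n" "a < N" "a < mk n k a" for k a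
  proof -
    have "(a, mk n k a) \<in> pairs N" using that inv[OF that(1)] unfolding pairs_def invol_def by auto
    then show ?thesis using sym fin by blast
  qed
  have Pcls: "P k = {e \<in> pairs N. case_prod (cls n) e = k}" if "k < n" for k
    unfolding set_eq_iff
  proof (intro allI)
    fix e :: "nat \<times> nat"
    obtain i j where e: "e = (i,j)" by (cases e)
    show "e \<in> P k \<longleftrightarrow> e \<in> {e \<in> pairs N. case_prod (cls n) e = k}"
    proof (cases "i < j \<and> j < N")
      case True
      then show ?thesis using mk_cls[OF n that, of i j] Nn e unfolding P_def pairs_def by auto
    next
      case False
      then show ?thesis using e unfolding P_def pairs_def by auto
    qed
  qed
  have grp: "(\<Sum>k\<in>{0..<n}. \<Sum>e\<in>P k. g e) = (\<Sum>e\<in>pairs N. g e)" for g :: "nat \<times> nat \<Rightarrow> real"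
  proof -
    have "(\<Sum>k\<in>{0..<n}. \<Sum>e\<in>P k. g e) = (\<Sum>k\<in>{0..<n}. \<Sum>e\<in>{e \<in> pairs N. case_prod (cls n) e = k}. g e)"
      by (rule sum.cong[OF refl]) (simp add: Pcls)
    also have "\<dots> = (\<Sum>e\<in>pairs N. g e)"
    proof (rule sum.group[OF finite_pairs])
      show "finite {0..<n}" by simp
      have "n > 0" using n by (metis odd_pos)
      then show "case_prod (cls n) ` pairs N \<subseteq> {0..<n}" unfolding cls_def by auto
    qed
    finally show ?thesis .
  qed
  have shift: "(\<Sum>k = 1..N-1. f (k - 1)) = (\<Sum>k\<in>{0..<n}. f k)" for f :: "nat \<Rightarrow> real"
  proof -
    have "{1..N-1} = Suc ` {0..<n}" unfolding n_def by (auto simp: image_iff)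
    then have "(\<Sum>k = 1..N-1. f (k - 1)) = (\<Sum>k\<in>Suc ` {0..<n}. f (k - 1))" by simp
    also have "\<dots> = (\<Sum>k\<in>{0..<n}. f (Suc k - 1))" by (subst sum.reindex) auto
    finally show ?thesis by simp
  qed
  have pdZ: "\<forall>k \<in> {1..N-1}. pd_mat N (Z k)"
  proof
    fix k assume "k \<in> {1..N-1}"
    then have k: "k - 1 < n" unfolding n_def by auto
    show "pd_mat N (Z k)" unfolding Z_def by (rule matching_pd[of N "mk n (k-1)" M, OF inv[OF k] MX[OF k]])
  qed
  have psi: "Psi N M = mat N N (\<lambda>(a, b). \<Sum>k = 1..N-1. Z k $$ (a, b))"
  proof (rule eq_matI)
    fix a b assume "a < dim_row (mat N N (\<lambda>(a, b). \<Sum>k = 1..N-1. Z k $$ (a, b)))"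
      "b < dim_col (mat N N (\<lambda>(a, b). \<Sum>k = 1..N-1. Z k $$ (a, b)))"
    then have ab: "a < N" "b < N" by auto
    have "(\<Sum>k = 1..N-1. Z k $$ (a, b)) = (\<Sum>k = 1..N-1. Zent (mk n (k-1)) M a b)"
      unfolding Z_def using ab by simp
    also have "\<dots> = (\<Sum>k\<in>{0..<n}. Zent (mk n k) M a b)" by (rule shift)
    also have "\<dots> = (\<Sum>k\<in>{0..<n}. \<Sum>e\<in>P k. case e of (i,j) \<Rightarrow> Psi_ij N i j (M i j) $$ (a,b))"
      by (rule sum.cong[OF refl]) (simp add: P_def zent_as_sum[OF inv ab])
    also have "\<dots> = (\<Sum>e\<in>pairs N. case e of (i,j) \<Rightarrow> Psi_ij N i j (M i j) $$ (a,b))" by (rule grp)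
    finally show "Psi N M $$ (a, b) = mat N N (\<lambda>(a, b). \<Sum>k = 1..N-1. Z k $$ (a, b)) $$ (a, b)"
      unfolding Psi_def using ab by simp
  qed (auto simp: Psi_def)
  have phi: "phi_SDD N M = (\<Sum>k = 1..N-1. ln (det (Z k)))"
  proof -
    have "(\<Sum>k = 1..N-1. ln (det (Z k))) = (\<Sum>k\<in>{0..<n}. ln (det (mat N N (\<lambda>(a,b). Zent (mk n k) M a b))))"
      unfolding Z_def by (rule shift)
    also have "\<dots> = (\<Sum>k\<in>{0..<n}. \<Sum>e\<in>P k. case e of (i,j) \<Rightarrow> ln (dt (M i j)))"
    proof (rule sum.cong[OF refl])
      fix k assume "k \<in> {0..<n}"
      then have k: "k < n" by simp
      have "ln (det (mat N N (\<lambda>(a,b). Zent (mk n k) M a b))) = ln (\<Prod>a\<in>{a. a<N \<and> a < mk n k a}. dt (M a (mk n k a)))"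
        using matching_det[of N "mk n k" M, OF inv[OF k] MX[OF k]] by simp
      also have "\<dots> = (\<Sum>a\<in>{a. a<N \<and> a < mk n k a}. ln (dt (M a (mk n k a))))"
        by (rule ln_prod) (use pd2_dt MX[OF k] in force)+
      also have "\<dots> = (\<Sum>e\<in>P k. case e of (i,j) \<Rightarrow> ln (dt (M i j)))"
        unfolding P_def by (rule sum_P_reindex[OF inv[OF k], symmetric])
      finally show "ln (det (mat N N (\<lambda>(a,b). Zent (mk n k) M a b))) = (\<Sum>e\<in>P k. case e of (i,j) \<Rightarrow> ln (dt (M i j)))" .
    qed
    also have "\<dots> = (\<Sum>e\<in>pairs N. case e of (i,j) \<Rightarrow> ln (dt (M i j)))" by (rule grp)
    finally show ?thesis unfolding phi_SDD_def dt_def by simp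
  qed
  show ?thesis using pdZ psi phi by blast
qed

end
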